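(* Let $\mathbb{K}$ be a field of characteristic zero (e.g. $\mathbb{Q}$, $\mathbb{R}$ or $\mathbb{C}$), and let $X,Y$ be non-commuting indeterminates. In the algebra $\mathbb{K}\langle\langle X,Y\rangle\rangle$ of formal power series in $X,Y$, there is a unique sequence $(C_k)_{k\ge 2}$, with each $C_k=C_k(X,Y)$ a homogeneous Lie polynomial in $X$ and $Y$ of degree $k$, such that $$ {\rm e}^{X+Y} = {\rm e}^{\frac{X}{2}}\,{\rm e}^{\frac{Y}{2}}\,{\rm e}^{C_2}\,{\rm e}^{C_3}\cdots{\rm e}^{C_k}\cdots\,{\rm e}^{C_k}\cdots{\rm e}^{C_3}\,{\rm e}^{C_2}\,{\rm e}^{\frac{Y}{2}}\,{\rm e}^{\frac{X}{2}}, $$ i.e. ${\rm e}^{X+Y}={\rm e}^{X/2}{\rm e}^{Y/2}\Big(\prod_{n=2}^{\infty}{\rm e}^{C_n}\Big)\Big(\prod_{n=\infty}^{2}{\rm e}^{C_n}\Big){\rm e}^{Y/2}{\rm e}^{X/2}$, where the first product is ordered with increasing index from left to right and the second with decreasing index. Moreover, $C_{2k}=0$ for all $k\ge 1$, so that $$ {\rm e}^{X+Y} = {\rm e}^{\frac{X}{2}}\,{\rm e}^{\frac{Y}{2}}\,{\rm e}^{C_3}\,{\rm e}^{C_5}\cdots{\rm e}^{C_{2k+1}}\cdots\,{\rm e}^{C_{2k+1}}\cdots{\rm e}^{C_5}\,{\rm e}^{C_3}\,{\rm e}^{\frac{Y}{2}}\,{\rm e}^{\frac{X}{2}}. $$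
   Context: $\mathbb{K}\langle\langle X,Y\rangle\rangle$ denotes the unital associative algebra of formal power series in the two non-commuting variables $X,Y$ over $\mathbb{K}$, with commutator $[a,b]=ab-ba$. A Lie polynomial in $X,Y$ is any element obtained from $X$ and $Y$ by finitely many additions, multiplications by scalars in $\mathbb{K}$ and commutators; it is homogeneous of degree $k$ if every term contains exactly $k$ letters. The exponential of an element without constant term is defined by its power series, and the infinite products converge in the formal (degree-graded) topology since $C_k$ has degree $k$. *)

theory Defs
  imports Main
begin

text \<open>Non-commutative formal power series in X, Y over a field: a series is the
  function sending each word to its coefficient. Words are lists of letters,
  False = X, True = Y.\<close>

type_synonym 'k ncps = "bool list \<Rightarrow> 'k"

definition ps_one :: "'k::field ncps" where
  "ps_one = (\<lambda>w. if w = [] then 1 else 0)"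

definition ps_X :: "'k::field ncps" where
  "ps_X = (\<lambda>w. if w = [False] then 1 else 0)"

definition ps_Y :: "'k::field ncps" where
  "ps_Y = (\<lambda>w. if w = [True] then 1 else 0)"

definition ps_add :: "'k::field ncps \<Rightarrow> 'k ncps \<Rightarrow> 'k ncps" where
  "ps_add f g = (\<lambda>w. f w + g w)"

definition ps_smult :: "'k::field \<Rightarrow> 'k ncps \<Rightarrow> 'k ncps" where
  "ps_smult c f = (\<lambda>w. c * f w)"

definition ps_mult :: "'k::field ncps \<Rightarrow> 'k ncps \<Rightarrow> 'k ncps" where
  "ps_mult f g = (\<lambda>w. \<Sum>i\<le>length w. f (take i w) * g (drop i w))"

definition ps_pow :: "'k::field ncps \<Rightarrow> nat \<Rightarrow> 'k ncps" where
  "ps_pow f n = ((ps_mult f) ^^ n) ps_one"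

definition ps_comm :: "'k::field ncps \<Rightarrow> 'k ncps \<Rightarrow> 'k ncps" where
  "ps_comm f g = ps_add (ps_mult f g) (ps_smult (-1) (ps_mult g f))"

text \<open>For f without constant term, f^n has
  no words of length < n, so the coefficient of w only receives contributions
  from n \<le> length w; the sum below is that (finite) coefficient.\<close>
definition ps_exp :: "'k::field ncps \<Rightarrow> 'k ncps" where
  "ps_exp f = (\<lambda>w. \<Sum>n\<le>length w. ps_pow f n w / of_nat (fact n))"

inductive_set lie_polys :: "'k::field ncps set" where
  lie_X: "ps_X \<in> lie_polys"
| lie_Y: "ps_Y \<in> lie_polys"
| lie_add: "f \<in> lie_polys \<Longrightarrow> g \<in> lie_polys \<Longrightarrow> ps_add f g \<in> lie_polys"
| lie_smult: "f \<in> lie_polys \<Longrightarrow> ps_smult c f \<in> lie_polys"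
| lie_comm: "f \<in> lie_polys \<Longrightarrow> g \<in> lie_polys \<Longrightarrow> ps_comm f g \<in> lie_polys"

definition homogeneous :: "nat \<Rightarrow> 'k::field ncps \<Rightarrow> bool" where
  "homogeneous k f \<longleftrightarrow> (\<forall>w. f w \<noteq> 0 \<longrightarrow> length w = k)"

definition ps_prod_list :: "'k::field ncps list \<Rightarrow> 'k ncps" where
  "ps_prod_list fs = foldr ps_mult fs ps_one"

definition formal_lim :: "(nat \<Rightarrow> 'k::field ncps) \<Rightarrow> 'k ncps \<Rightarrow> bool" where
  "formal_lim F L \<longleftrightarrow> (\<forall>w. \<exists>N0. \<forall>N\<ge>N0. F N w = L w)"

definition sym_partial :: "(nat \<Rightarrow> 'k::field ncps) \<Rightarrow> nat \<Rightarrow> 'k ncps" where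
  "sym_partial C N = ps_prod_list
     ([ps_exp (ps_smult (1/2) ps_X), ps_exp (ps_smult (1/2) ps_Y)]
      @ map (\<lambda>n. ps_exp (C n)) [2..<Suc N]
      @ map (\<lambda>n. ps_exp (C n)) (rev [2..<Suc N])
      @ [ps_exp (ps_smult (1/2) ps_Y), ps_exp (ps_smult (1/2) ps_X)])"

definition sym_factorization :: "(nat \<Rightarrow> 'k::field ncps) \<Rightarrow> bool" where
  "sym_factorization C \<longleftrightarrow>
     (\<forall>k\<ge>2. C k \<in> lie_polys \<and> homogeneous k (C k)) \<and>
     formal_lim (sym_partial C) (ps_exp (ps_add ps_X ps_Y))"

end

theory Submission
  imports Defs
begin


typedef 'a ser = "UNIV :: (bool list \<Rightarrow> 'a) set" morphisms coeff Ser by auto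

lemma coeff_Ser[simp]: "coeff (Ser f) = f" by (simp add: Ser_inverse)
lemma ser_eqI: "(\<And>w. coeff f w = coeff g w) \<Longrightarrow> f = g"
  by (metis coeff_inverse ext)

instantiation ser :: (comm_ring_1) ring_1
begin
definition "zero_ser = Ser (\<lambda>w. 0)"
definition "one_ser = Ser (\<lambda>w. if w = [] then 1 else 0)"
definition "plus_ser f g = Ser (\<lambda>w. coeff f w + coeff g w)"
definition "minus_ser f g = Ser (\<lambda>w. coeff f w - coeff g w)"
definition "uminus_ser f = Ser (\<lambda>w. - coeff f w)"
definition "times_ser f g = Ser (\<lambda>w. \<Sum>i\<le>length w. coeff f (take i w) * coeff g (drop i w))"

lemma coeff_0[simp]: "coeff (0::'a ser) w = 0" by (simp add: zero_ser_def)
lemma coeff_1: "coeff (1::'a ser) w = (if w = [] then 1 else 0)" by (simp add: one_ser_def)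
lemma coeff_add[simp]: "coeff (f + g) w = coeff f w + coeff g w" by (simp add: plus_ser_def)
lemma coeff_diff[simp]: "coeff (f - g) w = coeff f w - coeff g w" by (simp add: minus_ser_def)
lemma coeff_uminus[simp]: "coeff (- f) w = - coeff f w" by (simp add: uminus_ser_def)
lemma coeff_mult: "coeff (f * g) w = (\<Sum>i\<le>length w. coeff f (take i w) * coeff g (drop i w))"
  by (simp add: times_ser_def)

definition tlx :: "bool \<Rightarrow> 'a ser \<Rightarrow> 'a ser" where "tlx x f = Ser (\<lambda>v. coeff f (x # v))"
definition smc :: "'a \<Rightarrow> 'a ser \<Rightarrow> 'a ser" where "smc c f = Ser (\<lambda>v. c * coeff f v)"

lemma mult_Nil: "coeff (f * g) [] = coeff f [] * coeff g []"
  by (simp add: coeff_mult)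
lemma mult_Cons: "coeff (f * g) (x # w) = coeff f [] * coeff g (x # w) + coeff (tlx x f * g) w"
  by (simp add: coeff_mult sum.atMost_Suc_shift tlx_def del: sum.atMost_Suc)

lemma tlx_mult: "tlx x (f * g) = smc (coeff f []) (tlx x g) + tlx x f * g"
  by (rule ser_eqI) (simp add: tlx_def smc_def mult_Cons)

lemma smc_mult: "coeff (smc c f * g) w = c * coeff (f * g) w"
  by (simp add: coeff_mult smc_def sum_distrib_left mult.assoc)

lemma add_mult: "coeff ((f + g) * h) w = coeff (f * h) w + coeff (g * h) w"
  by (simp add: coeff_mult sum.distrib distrib_right)
lemma mult_add: "coeff (h * (f + g)) w = coeff (h * f) w + coeff (h * g) w"
  by (simp add: coeff_mult sum.distrib distrib_left)

lemma mult_assoc_ser: "coeff ((f * g) * h) w = coeff (f * (g * h)) w"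
proof (induction w arbitrary: f g h)
  case Nil
  then show ?case by (simp add: mult_Nil mult.assoc)
next
  case (Cons x w)
  have "coeff ((f * g) * h) (x # w) = coeff f [] * coeff g [] * coeff h (x#w)
     + coeff f [] * coeff (tlx x g * h) w + coeff ((tlx x f * g) * h) w"
    by (simp add: mult_Cons mult_Nil tlx_mult add_mult smc_mult)
  also have "\<dots> = coeff (f * (g * h)) (x # w)"
    by (simp add: mult_Cons mult_Nil Cons.IH distrib_left mult.assoc)
  finally show ?case .
qed

instance
proof
  fix a b c :: "'a ser"
  show "a * b * c = a * (b * c)" by (rule ser_eqI) (rule mult_assoc_ser)
  show "1 * a = a"
  proof (rule ser_eqI)
    fix w
    have "coeff (1 * a) w = (\<Sum>i\<in>{0}. coeff (1::'a ser) (take i w) * coeff a (drop i w))"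
      unfolding coeff_mult by (rule sum.mono_neutral_right) (auto simp: coeff_mult coeff_1)
    then show "coeff (1 * a) w = coeff a w" by (simp add: coeff_1)
  qed
  show "a * 1 = a"
  proof (rule ser_eqI)
    fix w
    have "coeff (a * 1) w = (\<Sum>i\<in>{length w}. coeff a (take i w) * coeff (1::'a ser) (drop i w))"
      unfolding coeff_mult by (rule sum.mono_neutral_right) (auto simp: coeff_mult coeff_1)
    then show "coeff (a * 1) w = coeff a w" by (simp add: coeff_1)
  qed
  show "(a + b) * c = a * c + b * c" by (rule ser_eqI) (simp add: add_mult)
  show "a * (b + c) = a * b + a * c" by (rule ser_eqI) (simp add: mult_add)
  show "a + b + c = a + (b + c)" by (rule ser_eqI) (simp add: add.assoc)
  show "a + b = b + a" by (rule ser_eqI) (simp add: add.commute)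
  show "0 + a = a" by (rule ser_eqI) simp
  show "- a + a = 0" by (rule ser_eqI) simp
  show "a - b = a + - b" by (rule ser_eqI) simp
  show "(0::'a ser) \<noteq> 1" proof assume "(0::'a ser) = 1" then have "coeff (0::'a ser) [] = coeff 1 []" by simp
    then show False by (simp add: coeff_1) qed
qed
end



definition const :: "'a::comm_ring_1 \<Rightarrow> 'a ser" where
  "const c = Ser (\<lambda>w. if w = [] then c else 0)"

lemma coeff_const: "coeff (const c) w = (if w = [] then c else 0)"
  by (simp add: const_def)

lemma const_mult_coeff[simp]: "coeff (const c * f) w = c * coeff f w"
proof -
  have "coeff (const c * f) w = (\<Sum>i\<in>{0}. coeff (const c) (take i w) * coeff f (drop i w))"
    unfolding coeff_mult by (rule sum.mono_neutral_right) (auto simp: coeff_const)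
  then show ?thesis by (simp add: coeff_const)
qed

lemma mult_const_coeff[simp]: "coeff (f * const c) w = coeff f w * c"
proof -
  have "coeff (f * const c) w = (\<Sum>i\<in>{length w}. coeff f (take i w) * coeff (const c) (drop i w))"
    unfolding coeff_mult by (rule sum.mono_neutral_right) (auto simp: coeff_const)
  then show ?thesis by (simp add: coeff_const)
qed

lemma const_comm: "f * const c = const c * f"
  by (rule ser_eqI) (simp add: mult.commute)

lemma const_mult_const: "const a * const b = const (a * b)"
  by (rule ser_eqI) (simp add: coeff_const)
lemma const_add: "const (a + b) = const a + const b"
  by (rule ser_eqI) (simp add: coeff_const)
lemma const_1: "const 1 = 1"
  by (rule ser_eqI) (simp add: coeff_const coeff_1)
lemma const_0: "const 0 = 0"
  by (rule ser_eqI) (simp add: coeff_const)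
lemma const_uminus: "const (- a) = - const a"
  by (rule ser_eqI) (simp add: coeff_const)
lemma const_mult_assoc: "const c * f * g = const c * (f * g)"
  by (simp add: mult.assoc)
lemma mult_const_left_comm: "f * (const c * g) = const c * (f * g)"
  by (metis const_comm mult.assoc)
lemma const_mult_smult: "const a * (const b * f) = const (a * b) * f"
  by (metis const_mult_const mult.assoc)
lemma const_of_nat: "of_nat n = const (of_nat n)"
  by (induction n) (simp_all add: const_0 const_add const_1)

lemma coeff_sum: "coeff (\<Sum>i\<in>A. f i) w = (\<Sum>i\<in>A. coeff (f i) w)"
  by (induction A rule: infinite_finite_induct) auto

lemma coeff_1_Nil[simp]: "coeff 1 [] = 1" by (simp add: coeff_1)
lemma coeff_1_Cons[simp]: "coeff 1 (x # w) = 0" by (simp add: coeff_1)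

section \<open>Valuation\<close>

definition vg :: "nat \<Rightarrow> 'a::comm_ring_1 ser \<Rightarrow> bool" where
  "vg n f \<longleftrightarrow> (\<forall>w. length w < n \<longrightarrow> coeff f w = 0)"

lemma vgD: "vg n f \<Longrightarrow> length w < n \<Longrightarrow> coeff f w = 0" by (simp add: vg_def)

lemma vg_mult: assumes "vg m f" "vg n g" shows "vg (m + n) (f * g)"
  unfolding vg_def
proof (intro allI impI)
  fix w :: "bool list" assume w: "length w < m + n"
  have "coeff f (take i w) * coeff g (drop i w) = 0" if "i \<le> length w" for i
  proof (cases "i < m")
    case True then show ?thesis using assms(1) that by (simp add: vg_def)
  next
    case False then show ?thesis using assms(2) that w by (simp add: vg_def)
  qed
  then show "coeff (f * g) w = 0" by (simp add: coeff_mult)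
qed

lemma vg_0[simp]: "vg 0 f" by (simp add: vg_def)
lemma vg_zero[simp]: "vg n 0" by (simp add: vg_def)
lemma vg_mono: "vg n f \<Longrightarrow> m \<le> n \<Longrightarrow> vg m f" by (simp add: vg_def)
lemma vg_add: "vg n f \<Longrightarrow> vg n g \<Longrightarrow> vg n (f + g)" by (simp add: vg_def)
lemma vg_diff: "vg n f \<Longrightarrow> vg n g \<Longrightarrow> vg n (f - g)" by (simp add: vg_def)
lemma vg_uminus: "vg n f \<Longrightarrow> vg n (- f)" by (simp add: vg_def)
lemma vg_const_mult: "vg n f \<Longrightarrow> vg n (const c * f)" by (simp add: vg_def)
lemma vg_mult_left: "vg n g \<Longrightarrow> vg n (f * g)" using vg_mult[of 0 f n g] by simp
lemma vg_mult_right: "vg n f \<Longrightarrow> vg n (f * g)" using vg_mult[of n f 0 g] by simp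
lemma vg_pow: "vg m f \<Longrightarrow> vg (n * m) (f ^ n)"
  by (induction n) (auto intro: vg_mult)
lemma vg_sum: "(\<And>i. i \<in> A \<Longrightarrow> vg n (f i)) \<Longrightarrow> vg n (\<Sum>i\<in>A. f i)"
  by (induction A rule: infinite_finite_induct) (auto intro: vg_add)

section \<open>Locally finite sums\<close>

definition lsum :: "(nat \<Rightarrow> 'a::comm_ring_1 ser) \<Rightarrow> 'a ser" where
  "lsum F = Ser (\<lambda>w. \<Sum>n\<le>length w. coeff (F n) w)"

lemma lsum_coeff:
  assumes "\<And>n. vg n (F n)" "length w \<le> N"
  shows "coeff (lsum F) w = (\<Sum>n\<le>N. coeff (F n) w)"
proof -
  have "(\<Sum>n\<le>N. coeff (F n) w) = (\<Sum>n\<le>length w. coeff (F n) w)"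
    by (rule sum.mono_neutral_right) (use assms in \<open>auto simp: vg_def\<close>)
  then show ?thesis by (simp add: lsum_def)
qed

lemma vg_lsum: assumes "\<And>n. vg n (F n)" "\<And>n. vg m (F n)" shows "vg m (lsum F)"
  using assms by (simp add: vg_def lsum_def)

lemma lsum_mult_right:
  assumes "\<And>n. vg n (F n)"
  shows "lsum F * g = lsum (\<lambda>n. F n * g)"
proof (rule ser_eqI)
  fix w :: "bool list"
  have F2: "vg n (F n * g)" for n using vg_mult_right[OF assms] .
  have "coeff (lsum F * g) w = (\<Sum>i\<le>length w. (\<Sum>n\<le>length w. coeff (F n) (take i w)) * coeff g (drop i w))"
    unfolding coeff_mult by (intro sum.cong refl, subst lsum_coeff[OF assms]) auto
  also have "\<dots> = (\<Sum>i\<le>length w. \<Sum>n\<le>length w. coeff (F n) (take i w) * coeff g (drop i w))"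
    by (simp add: sum_distrib_right)
  also have "\<dots> = (\<Sum>n\<le>length w. \<Sum>i\<le>length w. coeff (F n) (take i w) * coeff g (drop i w))"
    by (rule sum.swap)
  also have "\<dots> = (\<Sum>n\<le>length w. coeff (F n * g) w)"
    by (simp add: coeff_mult)
  also have "\<dots> = coeff (lsum (\<lambda>n. F n * g)) w"
    by (simp add: lsum_def)
  finally show "coeff (lsum F * g) w = coeff (lsum (\<lambda>n. F n * g)) w" .
qed

lemma lsum_mult_left:
  assumes "\<And>n. vg n (F n)"
  shows "g * lsum F = lsum (\<lambda>n. g * F n)"
proof (rule ser_eqI)
  fix w :: "bool list"
  have F2: "vg n (g * F n)" for n using vg_mult_left[OF assms] .
  have "coeff (g * lsum F) w = (\<Sum>i\<le>length w. coeff g (take i w) * (\<Sum>n\<le>length w. coeff (F n) (drop i w)))"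
    unfolding coeff_mult by (intro sum.cong refl, subst lsum_coeff[OF assms]) auto
  also have "\<dots> = (\<Sum>i\<le>length w. \<Sum>n\<le>length w. coeff g (take i w) * coeff (F n) (drop i w))"
    by (simp add: sum_distrib_left)
  also have "\<dots> = (\<Sum>n\<le>length w. \<Sum>i\<le>length w. coeff g (take i w) * coeff (F n) (drop i w))"
    by (rule sum.swap)
  also have "\<dots> = (\<Sum>n\<le>length w. coeff (g * F n) w)"
    by (simp add: coeff_mult)
  also have "\<dots> = coeff (lsum (\<lambda>n. g * F n)) w"
    by (simp add: lsum_def)
  finally show "coeff (g * lsum F) w = coeff (lsum (\<lambda>n. g * F n)) w" .
qed

lemma lsum_shift:
  assumes "\<And>n. vg n (F n)" "F 0 = 0"
  shows "lsum F = lsum (\<lambda>n. F (Suc n))"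
proof (rule ser_eqI)
  fix w :: "bool list"
  have G: "vg n (F (Suc n))" for n using assms(1)[of "Suc n"] by (rule vg_mono) simp
  have "coeff (lsum F) w = (\<Sum>n\<le>Suc (length w). coeff (F n) w)"
    by (rule lsum_coeff[OF assms(1)]) simp
  also have "\<dots> = (\<Sum>n\<le>length w. coeff (F (Suc n)) w)"
    by (simp add: sum.atMost_Suc_shift assms(2) del: sum.atMost_Suc)
  finally show "coeff (lsum F) w = coeff (lsum (\<lambda>n. F (Suc n))) w"
    by (simp add: lsum_def)
qed

lemma lsum_double:
  assumes "\<And>i j. vg (i + j) (F i j)"
  shows "lsum (\<lambda>i. lsum (F i)) = lsum (\<lambda>n. \<Sum>i\<le>n. F i (n - i))"
proof (rule ser_eqI)
  fix w :: "bool list"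
  let ?N = "length w"
  have Fi: "vg j (F i j)" for i j using assms[of i j] by (rule vg_mono) simp
  have Li: "vg i (lsum (F i))" for i
    by (rule vg_lsum[OF Fi]) (rule vg_mono[OF assms], simp)
  have S: "vg n (\<Sum>i\<le>n. F i (n - i))" for n
    by (rule vg_sum) (metis assms le_add_diff_inverse atMost_iff)
  have "coeff (lsum (\<lambda>i. lsum (F i))) w = (\<Sum>i\<le>?N. \<Sum>j\<le>?N. coeff (F i j) w)"
    by (subst lsum_coeff[OF Li, of w "length w"], simp, intro sum.cong refl, rule lsum_coeff[OF Fi], simp)
  also have "\<dots> = (\<Sum>(i,j)\<in>{..?N} \<times> {..?N}. coeff (F i j) w)"
    by (simp add: sum.cartesian_product)
  also have "\<dots> = (\<Sum>(i,j)\<in>{(i,j). i + j \<le> ?N}. coeff (F i j) w)"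
  proof (rule sum.mono_neutral_right)
    show "finite ({..?N} \<times> {..?N})" by simp
    show "{(i,j). i + j \<le> ?N} \<subseteq> {..?N} \<times> {..?N}" by auto
    show "\<forall>x\<in>{..?N} \<times> {..?N} - {(i,j). i + j \<le> ?N}. (case x of (i,j) \<Rightarrow> coeff (F i j) w) = 0"
      using assms unfolding vg_def by (clarsimp, metis not_le)
  qed
  also have "\<dots> = (\<Sum>n\<le>?N. \<Sum>i\<le>n. coeff (F i (n - i)) w)"
    by (rule sum.triangle_reindex_eq)
  also have "\<dots> = coeff (lsum (\<lambda>n. \<Sum>i\<le>n. F i (n - i))) w"
    by (simp add: lsum_def coeff_sum)
  finally show "coeff (lsum (\<lambda>i. lsum (F i))) w = coeff (lsum (\<lambda>n. \<Sum>i\<le>n. F i (n - i))) w" .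
qed



definition hom :: "nat \<Rightarrow> 'a::comm_ring_1 ser \<Rightarrow> bool" where
  "hom d f \<longleftrightarrow> (\<forall>w. coeff f w \<noteq> 0 \<longrightarrow> length w = d)"

definition cmp :: "nat \<Rightarrow> 'a::comm_ring_1 ser \<Rightarrow> 'a ser" where
  "cmp m f = Ser (\<lambda>w. if length w = m then coeff f w else 0)"

definition Eu :: "'a::comm_ring_1 ser \<Rightarrow> 'a ser" where
  "Eu f = Ser (\<lambda>w. of_nat (length w) * coeff f w)"

definition sexp :: "'a::field ser \<Rightarrow> 'a ser" where
  "sexp a = Ser (\<lambda>w. \<Sum>n\<le>length w. coeff (a ^ n) w / of_nat (fact n))"

lemma coeff_comp: "coeff (cmp m f) w = (if length w = m then coeff f w else 0)"
  by (simp add: cmp_def)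
lemma coeff_Eu: "coeff (Eu f) w = of_nat (length w) * coeff f w"
  by (simp add: Eu_def)

lemma homD: "hom d f \<Longrightarrow> length w \<noteq> d \<Longrightarrow> coeff f w = 0"
  by (auto simp: hom_def)

lemma hom_mult: assumes "hom a f" "hom b g" shows "hom (a + b) (f * g)"
  unfolding hom_def
proof (intro allI impI)
  fix w :: "bool list" assume "coeff (f * g) w \<noteq> 0"
  then obtain i where i: "i \<le> length w" "coeff f (take i w) * coeff g (drop i w) \<noteq> 0"
    unfolding coeff_mult by (metis (mono_tags, lifting) atMost_iff sum.neutral)
  then have "coeff f (take i w) \<noteq> 0" "coeff g (drop i w) \<noteq> 0" by auto
  then have "length (take i w) = a" "length (drop i w) = b"
    using assms unfolding hom_def by blast+
  then show "length w = a + b" using i(1) by simp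
qed

lemma hom_1: "hom 0 1" by (simp add: hom_def coeff_1)
lemma hom_pow: "hom d f \<Longrightarrow> hom (n * d) (f ^ n)"
  by (induction n) (auto simp: hom_1 dest: hom_mult)
lemma hom_vg: "hom d f \<Longrightarrow> vg d f"
  by (auto simp: hom_def vg_def)
lemma hom_add: "hom d f \<Longrightarrow> hom d g \<Longrightarrow> hom d (f + g)" unfolding hom_def by (metis add.left_neutral coeff_add)
lemma hom_uminus: "hom d f \<Longrightarrow> hom d (- f)" by (auto simp: hom_def)
lemma hom_const_mult: "hom d f \<Longrightarrow> hom d (const c * f)" unfolding hom_def by (metis mult_zero_right const_mult_coeff)
lemma hom_zero: "hom d 0" by (auto simp: hom_def)
lemma hom_comp: "hom m (cmp m f)" by (auto simp: hom_def coeff_comp)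
lemma comp_hom: "hom m f \<Longrightarrow> cmp m f = f"
  by (rule ser_eqI) (auto simp: hom_def coeff_comp)
lemma comp_hom_other: "hom d f \<Longrightarrow> m \<noteq> d \<Longrightarrow> cmp m f = 0"
  by (rule ser_eqI) (auto simp: hom_def coeff_comp)
lemma comp_add: "cmp m (f + g) = cmp m f + cmp m g"
  by (rule ser_eqI) (auto simp: coeff_comp)
lemma comp_diff: "cmp m (f - g) = cmp m f - cmp m g"
  by (rule ser_eqI) (auto simp: coeff_comp)
lemma comp_uminus: "cmp m (- f) = - cmp m f"
  by (rule ser_eqI) (auto simp: coeff_comp)
lemma comp_const_mult: "cmp m (const c * f) = const c * cmp m f"
  by (rule ser_eqI) (auto simp: coeff_comp)
lemma comp_zero: "cmp m 0 = 0"
  by (rule ser_eqI) (auto simp: coeff_comp)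
lemma comp_sum: "cmp m (\<Sum>i\<in>A. f i) = (\<Sum>i\<in>A. cmp m (f i))"
  by (rule ser_eqI) (auto simp: coeff_comp coeff_sum)

lemma Eu_hom: "hom d f \<Longrightarrow> Eu f = const (of_nat d) * f"
  apply (rule ser_eqI)
  subgoal for w by (cases "coeff f w = 0") (auto simp: coeff_Eu hom_def)
  done

lemma Eu_mult: "Eu (f * g) = Eu f * g + f * Eu g"
proof (rule ser_eqI)
  fix w :: "bool list"
  have "coeff (Eu (f * g)) w = (\<Sum>i\<le>length w. of_nat (length w) * (coeff f (take i w) * coeff g (drop i w)))"
    by (simp add: coeff_Eu coeff_mult sum_distrib_left)
  also have "\<dots> = (\<Sum>i\<le>length w. (of_nat (length (take i w)) * coeff f (take i w)) * coeff g (drop i w)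
      + coeff f (take i w) * (of_nat (length (drop i w)) * coeff g (drop i w)))"
  proof (rule sum.cong[OF refl])
    fix i assume "i \<in> {..length w}"
    then have "of_nat (length w) = (of_nat (length (take i w)) + of_nat (length (drop i w)) :: 'a)"
      by (simp flip: of_nat_add)
    then show "of_nat (length w) * (coeff f (take i w) * coeff g (drop i w)) =
      of_nat (length (take i w)) * coeff f (take i w) * coeff g (drop i w) + coeff f (take i w) * (of_nat (length (drop i w)) * coeff g (drop i w))"
      by (simp add: algebra_simps)
  qed
  also have "\<dots> = coeff (Eu f * g + f * Eu g) w"
    by (simp only: coeff_Eu coeff_mult coeff_add sum.distrib)
  finally show "coeff (Eu (f * g)) w = coeff (Eu f * g + f * Eu g) w" .
qed

lemma Eu_add: "Eu (f + g) = Eu f + Eu g"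
  by (rule ser_eqI) (simp add: coeff_Eu algebra_simps)
lemma Eu_const_mult: "Eu (const c * f) = const c * Eu f"
  by (rule ser_eqI) (simp add: coeff_Eu algebra_simps)
lemma Eu_1: "Eu 1 = 0"
  by (rule ser_eqI) (simp add: coeff_Eu coeff_1)
lemma Eu_lsum: "Eu (lsum F) = lsum (\<lambda>n. Eu (F n))"
  by (rule ser_eqI) (simp add: coeff_Eu lsum_def sum_distrib_left)

definition ex :: "'a::field ser \<Rightarrow> nat \<Rightarrow> 'a ser" where
  "ex a n = const (inverse (of_nat (fact n))) * a ^ n"

lemma vg_ex: "vg 1 a \<Longrightarrow> vg n (ex a n)"
  unfolding ex_def by (rule vg_const_mult) (use vg_pow[of 1 a n] in simp)

lemma sexp_lsum: "vg 1 a \<Longrightarrow> sexp a = lsum (ex a)"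
  by (rule ser_eqI) (simp add: sexp_def lsum_def ex_def divide_inverse mult.commute)

lemma sexp_Nil: "coeff (sexp a) [] = 1"
  by (simp add: sexp_def)

lemma hom_vg1: "hom d a \<Longrightarrow> 1 \<le> d \<Longrightarrow> vg 1 a"
  using hom_vg vg_mono by blast

lemma a_sexp_comm: assumes "vg 1 a" shows "a * sexp a = sexp a * a"
proof -
  have "a * ex a n = ex a n * a" for n
    unfolding ex_def by (simp add: mult_const_left_comm mult.assoc power_commutes)
  then show ?thesis
    using assms by (simp add: sexp_lsum lsum_mult_left lsum_mult_right vg_ex)
qed

lemma fact_aux: "inverse (of_nat (fact (Suc n)) :: 'a::field_char_0) * of_nat (Suc n * d) = of_nat d * inverse (of_nat (fact n))"
proof -
  define F where "F = (of_nat (fact n)::'a)"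
  define S where "S = (of_nat (Suc n)::'a)"
  have a: "F \<noteq> 0" by (simp add: F_def)
  have b: "S \<noteq> 0" unfolding S_def of_nat_eq_0_iff by simp
  have e1: "of_nat (fact (Suc n)) = S * F" by (simp only: fact_Suc of_nat_mult S_def F_def of_nat_id)
  have e2: "(of_nat (Suc n * d)::'a) = S * of_nat d" by (simp only: of_nat_mult S_def)
  show ?thesis unfolding e1 e2 F_def[symmetric] using a b by (simp add: field_simps)
qed

lemma Eu_sexp:
  fixes a :: "'a::field_char_0 ser"
  assumes "hom d a" "1 \<le> d"
  shows "Eu (sexp a) = const (of_nat d) * a * sexp a"
proof -
  have v: "vg 1 a" using hom_vg1 assms by blast
  have "Eu (sexp a) = lsum (\<lambda>n. Eu (ex a n))" by (simp add: sexp_lsum[OF v] Eu_lsum)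
  also have "\<dots> = lsum (\<lambda>n. Eu (ex a (Suc n)))"
  proof (rule lsum_shift)
    show "vg n (Eu (ex a n))" for n using vg_ex[OF v, of n] by (simp add: vg_def coeff_Eu)
    show "Eu (ex a 0) = 0" by (simp add: ex_def const_1 Eu_1)
  qed
  also have "\<dots> = lsum (\<lambda>n. const (of_nat d) * a * ex a n)"
  proof -
    have "Eu (ex a (Suc n)) = const (of_nat d) * a * ex a n" for n
    proof -
      have h: "hom (Suc n * d) (a ^ Suc n)" by (rule hom_pow[OF assms(1)])
      have "Eu (ex a (Suc n)) = const (inverse (of_nat (fact (Suc n))) * of_nat (Suc n * d)) * a ^ Suc n"
        by (simp add: ex_def Eu_const_mult Eu_hom[OF h] const_mult_smult del: power_Suc fact_Suc of_nat_Suc)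
      also have "inverse (of_nat (fact (Suc n))) * of_nat (Suc n * d) = (of_nat d * inverse (of_nat (fact n)) :: 'a)"
        by (rule fact_aux)
      finally show ?thesis
        by (simp only: ex_def mult.assoc mult_const_left_comm[of a] const_mult_smult power_Suc)
    qed
    then show ?thesis by simp
  qed
  also have "\<dots> = const (of_nat d) * a * sexp a"
    by (simp add: sexp_lsum[OF v] lsum_mult_left vg_ex[OF v])
  finally show ?thesis .
qed

lemma Eu_zero_eq_1:
  fixes g :: "'a::field_char_0 ser"
  assumes "Eu g = 0" "coeff g [] = 1" shows "g = 1"
proof (rule ser_eqI)
  fix w :: "bool list"
  show "coeff g w = coeff 1 w"
  proof (cases w)
    case Nil then show ?thesis using assms by simp
  next
    case (Cons x v)
    have "of_nat (length w) * coeff g w = 0" using arg_cong[OF assms(1), of "\<lambda>f. coeff f w"]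
      by (simp add: coeff_Eu)
    moreover have "of_nat (length w) \<noteq> (0::'a)" using Cons by (simp only: of_nat_eq_0_iff) simp
    ultimately show ?thesis using Cons by simp
  qed
qed

lemma sexp_inv:
  fixes a :: "'a::field_char_0 ser"
  assumes "hom d a" "1 \<le> d"
  shows "sexp a * sexp (- a) = 1"
proof (rule Eu_zero_eq_1)
  have h2: "hom d (- a)" using hom_uminus[OF assms(1)] .
  have "Eu (sexp a * sexp (- a)) = const (of_nat d) * a * sexp a * sexp (- a)
      + sexp a * (const (of_nat d) * (- a) * sexp (- a))"
    by (simp add: Eu_mult Eu_sexp[OF assms] Eu_sexp[OF h2 assms(2)])
  also have "\<dots> = const (of_nat d) * (a * sexp a - sexp a * a) * sexp (- a)"
    by (simp add: mult_const_left_comm mult.assoc right_diff_distrib left_diff_distrib)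
  also have "\<dots> = 0" by (simp add: a_sexp_comm[OF hom_vg1[OF assms]])
  finally show "Eu (sexp a * sexp (- a)) = 0" .
  show "coeff (sexp a * sexp (- a)) [] = 1" by (simp add: mult_Nil sexp_Nil)
qed

lemma sexp_low:
  fixes a :: "'a::field ser"
  assumes "hom d a" "1 \<le> d"
  shows "vg (2 * d) (sexp a - 1 - a)"
  unfolding vg_def
proof (intro allI impI)
  fix w :: "bool list" assume w: "length w < 2 * d"
  have "coeff (sexp a) w = coeff (lsum (ex a)) w" by (simp add: sexp_lsum[OF hom_vg1[OF assms]])
  also have "\<dots> = (\<Sum>n\<le>Suc (length w). coeff (ex a n) w)"
    by (rule lsum_coeff) (auto intro: vg_ex hom_vg1[OF assms])
  also have "\<dots> = (\<Sum>n\<in>{0,1}. coeff (ex a n) w)"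
  proof (rule sum.mono_neutral_right)
    show "\<forall>i\<in>{..Suc (length w)} - {0, 1}. coeff (ex a i) w = 0"
    proof
      fix i assume i: "i \<in> {..Suc (length w)} - {0, 1}"
      then have "i * d \<ge> 2 * d" by auto
      then have "length w \<noteq> i * d" using w by linarith
      then have "coeff (a ^ i) w = 0" using homD[OF hom_pow[OF assms(1), of i]] by auto
      then show "coeff (ex a i) w = 0" by (simp add: ex_def)
    qed
  qed auto
  also have "\<dots> = coeff 1 w + coeff a w" by (simp add: ex_def const_1)
  finally show "coeff (sexp a - 1 - a) w = 0" by simp
qed



lemma ps_mult_ser: "ps_mult f g = coeff (Ser f * Ser g)"
  by (simp add: fun_eq_iff ps_mult_def coeff_mult)
lemma ps_add_ser: "ps_add f g = coeff (Ser f + Ser g)"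
  by (simp add: fun_eq_iff ps_add_def)
lemma ps_smult_ser: "ps_smult c f = coeff (const c * Ser f)"
  by (simp add: fun_eq_iff ps_smult_def)
lemma ps_one_ser: "ps_one = coeff (1::'a::field ser)"
  by (simp add: ps_one_def coeff_1 fun_eq_iff)
lemma ps_pow_ser: "ps_pow f n = coeff (Ser f ^ n)"
  by (induction n) (simp_all add: ps_pow_def ps_one_ser ps_mult_ser coeff_inverse)
lemma ps_exp_ser: "ps_exp f = coeff (sexp (Ser f))"
  by (simp add: ps_exp_def sexp_def ps_pow_ser)
lemma ps_comm_ser: "ps_comm f g = coeff (Ser f * Ser g - Ser g * Ser f)"
  by (simp add: ps_comm_def ps_add_def ps_smult_def ps_mult_ser fun_eq_iff)
lemma ps_prod_list_ser: "ps_prod_list fs = coeff (prod_list (map Ser fs))"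
  by (induction fs) (simp_all add: ps_prod_list_def ps_one_ser ps_mult_ser coeff_inverse)

section \<open>Lie elements\<close>

definition islie :: "'a::field ser \<Rightarrow> bool" where
  "islie f \<longleftrightarrow> coeff f \<in> lie_polys"

definition Xs :: "'a::field ser" where "Xs = Ser ps_X"
definition Ys :: "'a::field ser" where "Ys = Ser ps_Y"

lemma islie_X: "islie Xs" by (simp add: islie_def Xs_def lie_X)
lemma islie_Y: "islie Ys" by (simp add: islie_def Ys_def lie_Y)
lemma islie_add: "islie f \<Longrightarrow> islie g \<Longrightarrow> islie (f + g)"
  using lie_add[of "coeff f" "coeff g"] by (simp add: islie_def ps_add_ser coeff_inverse)
lemma islie_const_mult: "islie f \<Longrightarrow> islie (const c * f)"
  using lie_smult[of "coeff f" c] by (simp add: islie_def ps_smult_ser coeff_inverse)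
lemma islie_comm: "islie f \<Longrightarrow> islie g \<Longrightarrow> islie (f * g - g * f)"
  using lie_comm[of "coeff f" "coeff g"] by (simp add: islie_def ps_comm_ser coeff_inverse)
lemma islie_0: "islie (0::'a::field ser)"
  using islie_const_mult[OF islie_X, of 0] by (simp add: const_0)
lemma islie_uminus: "islie f \<Longrightarrow> islie (- f)"
  using islie_const_mult[of f "-1"] by (simp add: const_uminus const_1)
lemma islie_diff: "islie f \<Longrightarrow> islie g \<Longrightarrow> islie (f - g)"
  using islie_add[OF _ islie_uminus] by (metis diff_conv_add_uminus)
lemma islie_sum: "(\<And>i. i \<in> A \<Longrightarrow> islie (f i)) \<Longrightarrow> islie (\<Sum>i\<in>A. f i)"
  by (induction A rule: infinite_finite_induct) (auto intro: islie_add islie_0)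

definition lieser :: "'a::field ser \<Rightarrow> bool" where
  "lieser z \<longleftrightarrow> (\<forall>m. islie (cmp m z))"

lemma lieser_add: "lieser f \<Longrightarrow> lieser g \<Longrightarrow> lieser (f + g)"
  by (simp add: lieser_def comp_add islie_add)
lemma lieser_0: "lieser 0"
  by (simp add: lieser_def comp_zero islie_0)
lemma lieser_hom: "islie b \<Longrightarrow> hom d b \<Longrightarrow> lieser b"
  unfolding lieser_def by (metis comp_hom comp_hom_other islie_0)
lemma lieser_const_mult: "lieser f \<Longrightarrow> lieser (const c * f)"
  by (simp add: lieser_def comp_const_mult islie_const_mult)

section \<open>Multiplication by homogeneous elements\<close>

lemma coeff_mult_hom_left:
  assumes "hom d b"
  shows "coeff (b * f) w = (if d \<le> length w then coeff b (take d w) * coeff f (drop d w) else 0)"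
proof -
  have "coeff (b * f) w = (\<Sum>i\<in>(if d \<le> length w then {d} else {}). coeff b (take i w) * coeff f (drop i w))"
    unfolding coeff_mult
  proof (rule sum.mono_neutral_right)
    have z: "coeff b (take i w) = 0" if "i \<le> length w" "i \<noteq> d" for i
      using assms that unfolding hom_def by (metis length_take min.absorb2)
    show "\<forall>i\<in>{..length w} - (if d \<le> length w then {d} else {}). coeff b (take i w) * coeff f (drop i w) = 0"
      using z by auto
  qed auto
  then show ?thesis by simp
qed

lemma coeff_mult_hom_right:
  assumes "hom d b"
  shows "coeff (f * b) w = (if d \<le> length w then coeff f (take (length w - d) w) * coeff b (drop (length w - d) w) else 0)"
proof -
  have "coeff (f * b) w = (\<Sum>i\<in>(if d \<le> length w then {length w - d} else {}). coeff f (take i w) * coeff b (drop i w))"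
    unfolding coeff_mult
  proof (rule sum.mono_neutral_right)
    have z: "coeff b (drop i w) = 0" if "i \<le> length w" "length w - i \<noteq> d" for i
    proof -
      have "length (drop i w) \<noteq> d" using that by auto
      then show ?thesis using assms unfolding hom_def by blast
    qed
    show "\<forall>i\<in>{..length w} - (if d \<le> length w then {length w - d} else {}). coeff f (take i w) * coeff b (drop i w) = 0"
    proof
      fix i assume i: "i \<in> {..length w} - (if d \<le> length w then {length w - d} else {})"
      then have "i \<le> length w" "length w - i \<noteq> d"
        by (auto split: if_splits)
      then show "coeff f (take i w) * coeff b (drop i w) = 0" using z by simp
    qed
  qed auto
  then show ?thesis by simp
qed

lemma comp_mult_hom_left:
  assumes "hom d b"
  shows "cmp m (b * f) = (if d \<le> m then b * cmp (m - d) f else 0)"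
  by (rule ser_eqI) (auto simp: coeff_comp coeff_mult_hom_left[OF assms])

lemma comp_mult_hom_right:
  assumes "hom d b"
  shows "cmp m (f * b) = (if d \<le> m then cmp (m - d) f * b else 0)"
  by (rule ser_eqI) (auto simp: coeff_comp coeff_mult_hom_right[OF assms])

primrec adp :: "'a::field ser \<Rightarrow> nat \<Rightarrow> 'a ser \<Rightarrow> 'a ser" where
  "adp b 0 z = z"
| "adp b (Suc n) z = b * adp b n z - adp b n z * b"

lemma islie_adp: "islie b \<Longrightarrow> islie z \<Longrightarrow> islie (adp b n z)"
  by (induction n) (simp_all add: islie_comm)

lemma cmp_adp:
  assumes "hom d b"
  shows "cmp m (adp b n z) = (if n * d \<le> m then adp b n (cmp (m - n * d) z) else 0)"
proof (induction n arbitrary: m)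
  case 0
  then show ?case by simp
next
  case (Suc n)
  show ?case
  proof (cases "d \<le> m")
    case True
    then show ?thesis
      by (simp add: comp_diff comp_mult_hom_left[OF assms] comp_mult_hom_right[OF assms] Suc.IH
          comp_zero diff_diff_add add.commute le_diff_conv2)
  next
    case False
    then show ?thesis
      by (simp add: comp_diff comp_mult_hom_left[OF assms] comp_mult_hom_right[OF assms])
  qed
qed

lemma vg_adp: "vg d b \<Longrightarrow> vg (n * d) (adp b n z)"
proof (induction n)
  case 0 then show ?case by simp
next
  case (Suc n)
  have "vg (d + n * d) (b * adp b n z)" by (rule vg_mult[OF Suc.prems Suc.IH[OF Suc.prems]])
  moreover have "vg (n * d + d) (adp b n z * b)" by (rule vg_mult[OF Suc.IH[OF Suc.prems] Suc.prems])
  ultimately show ?case by (simp add: vg_diff add.commute)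
qed

lemma adp_binom:
  "adp b n z = (\<Sum>i\<le>n. const (of_nat (n choose i)) * (b ^ i * z * (- b) ^ (n - i)))"
proof (induction n)
  case 0 then show ?case by (simp add: const_1)
next
  case (Suc n)
  define T where "T i j = b ^ i * z * (- b) ^ j" for i j
  have L: "b * (const c * T i j) = const c * T (Suc i) j" for c i j
    unfolding T_def by (simp only: mult_const_left_comm[of b] mult.assoc power_Suc)
  have R: "(const c * T i j) * (- b) = const c * T i (Suc j)" for c i j
    unfolding T_def by (simp only: mult.assoc power_Suc2)
  have "adp b (Suc n) z = b * adp b n z + adp b n z * (- b)"
    by simp
  also have "\<dots> = (\<Sum>i\<le>n. b * (const (of_nat (n choose i)) * T i (n - i)))
      + (\<Sum>i\<le>n. (const (of_nat (n choose i)) * T i (n - i)) * (- b))"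
    by (simp only: Suc.IH sum_distrib_left sum_distrib_right T_def)
  also have "\<dots> = (\<Sum>i\<le>n. const (of_nat (n choose i)) * T (Suc i) (n - i))
      + (\<Sum>i\<le>n. const (of_nat (n choose i)) * T i (Suc (n - i)))"
    by (simp only: L R)
  also have "\<dots> = (\<Sum>i\<le>Suc n. const (of_nat (Suc n choose i)) * T i (Suc n - i))"
  proof -
    have A: "(\<Sum>i\<le>n. const (of_nat (n choose i)) * T (Suc i) (n - i))
        = (\<Sum>i\<le>Suc n. const (of_nat (if i = 0 then 0 else n choose (i - 1))) * T i (Suc n - i))"
      by (simp add: sum.atMost_Suc_shift const_0 del: sum.atMost_Suc)
    have B: "(\<Sum>i\<le>n. const (of_nat (n choose i)) * T i (Suc (n - i)))
        = (\<Sum>i\<le>Suc n. const (of_nat (n choose i)) * T i (Suc n - i))"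
      by (simp add: Suc_diff_le const_0 binomial_eq_0)
    show ?thesis unfolding A B sum.distrib[symmetric]
    proof (rule sum.cong[OF refl])
      fix i assume "i \<in> {..Suc n}"
      show "const (of_nat (if i = 0 then 0 else n choose (i - 1))) * T i (Suc n - i) +
          const (of_nat (n choose i)) * T i (Suc n - i) = const (of_nat (Suc n choose i)) * T i (Suc n - i)"
        by (cases i) (simp_all add: const_add[symmetric] distrib_right[symmetric])
    qed
  qed
  finally show ?case by (simp add: T_def)
qed



lemma binom_aux:
  assumes "k \<le> n"
  shows "inverse (of_nat (fact n)) * of_nat (n choose k) =
         inverse (of_nat (fact k)) * (inverse (of_nat (fact (n - k))) :: 'a::field_char_0)"
proof -
  define a where "a = (of_nat (fact k) :: 'a)"
  define b where "b = (of_nat (fact (n - k)) :: 'a)"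
  define c where "c = (of_nat (n choose k) :: 'a)"
  have e: "(of_nat (fact n) :: 'a) = a * b * c"
    unfolding a_def b_def c_def by (simp only: of_nat_mult[symmetric] binomial_fact_lemma[OF assms])
  have "a \<noteq> 0" "b \<noteq> 0" unfolding a_def b_def by simp_all
  moreover have "c \<noteq> 0" unfolding c_def using assms by simp
  ultimately show ?thesis unfolding e a_def[symmetric] b_def[symmetric] c_def[symmetric]
    by (simp add: field_simps)
qed

lemma conj_lsum:
  fixes b :: "'a::field_char_0 ser"
  assumes b: "vg 1 b"
  shows "sexp b * z * sexp (- b) = lsum (\<lambda>n. const (inverse (of_nat (fact n))) * adp b n z)"
proof -
  have b2: "vg 1 (- b)" using b by (rule vg_uminus)
  have v1: "vg i (ex b i * z)" for i by (rule vg_mult_right[OF vg_ex[OF b]])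
  have v2: "vg (i + j) (ex b i * z * ex (- b) j)" for i j
    by (rule vg_mult[OF v1 vg_ex[OF b2]])
  have "sexp b * z * sexp (- b) = lsum (\<lambda>i. ex b i * z) * lsum (ex (- b))"
    by (simp add: sexp_lsum[OF b] sexp_lsum[OF b2] lsum_mult_right[OF vg_ex[OF b]])
  also have "\<dots> = lsum (\<lambda>i. lsum (\<lambda>j. ex b i * z * ex (- b) j))"
    by (simp only: lsum_mult_right[OF v1]) (simp only: lsum_mult_left[OF vg_ex[OF b2]])
  also have "\<dots> = lsum (\<lambda>n. \<Sum>i\<le>n. ex b i * z * ex (- b) (n - i))"
    by (rule lsum_double[OF v2])
  also have "\<dots> = lsum (\<lambda>n. const (inverse (of_nat (fact n))) * adp b n z)"
  proof -
    have "(\<Sum>i\<le>n. ex b i * z * ex (- b) (n - i)) = const (inverse (of_nat (fact n))) * adp b n z" for n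
    proof -
      have "ex b i * z * ex (- b) (n - i) =
          const (inverse (of_nat (fact n)) * of_nat (n choose i)) * (b ^ i * z * (- b) ^ (n - i))"
        if "i \<le> n" for i
      proof -
        have "ex b i * z * ex (- b) (n - i) =
          const (inverse (of_nat (fact i)) * inverse (of_nat (fact (n - i)))) * (b ^ i * z * (- b) ^ (n - i))"
          unfolding ex_def
          by (simp only: mult.assoc mult_const_left_comm[of "b ^ i"] mult_const_left_comm[of z]
              const_mult_smult)
        then show ?thesis by (simp only: binom_aux[OF that])
      qed
      then have "(\<Sum>i\<le>n. ex b i * z * ex (- b) (n - i)) =
          (\<Sum>i\<le>n. const (inverse (of_nat (fact n))) * (const (of_nat (n choose i)) * (b ^ i * z * (- b) ^ (n - i))))"
        by (simp add: const_mult_smult)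
      also have "\<dots> = const (inverse (of_nat (fact n))) * adp b n z"
        by (simp only: adp_binom sum_distrib_left)
      finally show ?thesis .
    qed
    then show ?thesis by simp
  qed
  finally show ?thesis .
qed

lemma cmp_lsum:
  assumes "\<And>n. vg n (F n)"
  shows "cmp m (lsum F) = (\<Sum>n\<le>m. cmp m (F n))"
  by (rule ser_eqI) (simp add: coeff_comp coeff_sum lsum_coeff[OF assms])

lemma lieser_conj:
  fixes b :: "'a::field_char_0 ser"
  assumes h: "hom d b" "1 \<le> d" and l: "islie b" and z: "lieser z"
  shows "lieser (sexp b * z * sexp (- b))"
  unfolding lieser_def
proof
  fix m
  have b: "vg 1 b" using hom_vg1[OF h] .
  have v: "vg n (const (inverse (of_nat (fact n))) * adp b n z)" for n
  proof -
    have "vg (n * 1) (adp b n z)" by (rule vg_adp[OF b])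
    then show ?thesis by (simp add: vg_const_mult)
  qed
  have "cmp m (sexp b * z * sexp (- b)) =
     (\<Sum>n\<le>m. const (inverse (of_nat (fact n))) * cmp m (adp b n z))"
    by (simp only: conj_lsum[OF b] cmp_lsum[OF v] comp_const_mult)
  also have "\<dots> = (\<Sum>n\<le>m. const (inverse (of_nat (fact n))) *
      (if n * d \<le> m then adp b n (cmp (m - n * d) z) else 0))"
    by (simp add: cmp_adp[OF h(1)])
  finally have e: "cmp m (sexp b * z * sexp (- b)) = \<dots>" .
  show "islie (cmp m (sexp b * z * sexp (- b)))"
    unfolding e
    by (rule islie_sum) (use l z in \<open>auto intro!: islie_const_mult islie_adp islie_0 simp: lieser_def\<close>)
qed

section \<open>Products of exponentials\<close>

definition pe :: "'a::field ser list \<Rightarrow> 'a ser" where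
  "pe L = prod_list (map sexp L)"

definition pinv :: "'a::field ser list \<Rightarrow> 'a ser" where
  "pinv L = pe (map uminus (rev L))"

definition homl :: "'a::field ser list \<Rightarrow> bool" where
  "homl L \<longleftrightarrow> (\<forall>a\<in>set L. \<exists>d. 1 \<le> d \<and> hom d a)"

definition goodl :: "'a::field ser list \<Rightarrow> bool" where
  "goodl L \<longleftrightarrow> (\<forall>a\<in>set L. islie a \<and> (\<exists>d. 1 \<le> d \<and> hom d a))"

lemma pe_Nil[simp]: "pe [] = 1" by (simp add: pe_def)
lemma pe_Cons[simp]: "pe (a # L) = sexp a * pe L" by (simp add: pe_def)
lemma pe_append: "pe (L @ M) = pe L * pe M" by (simp add: pe_def)
lemma pinv_Nil[simp]: "pinv [] = 1" by (simp add: pinv_def)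
lemma pinv_Cons[simp]: "pinv (a # L) = pinv L * sexp (- a)" by (simp add: pinv_def pe_append)
lemma pinv_append: "pinv (L @ M) = pinv M * pinv L" by (simp add: pinv_def pe_append)

lemma goodl_homl: "goodl L \<Longrightarrow> homl L" by (auto simp: goodl_def homl_def)

lemma pe_pinv:
  fixes L :: "'a::field_char_0 ser list"
  shows "homl L \<Longrightarrow> pe L * pinv L = 1"
proof (induction L)
  case Nil then show ?case by simp
next
  case (Cons a L)
  then obtain d where d: "1 \<le> d" "hom d a" by (auto simp: homl_def)
  have "pe (a # L) * pinv (a # L) = sexp a * (pe L * pinv L) * sexp (- a)"
    by (simp add: mult.assoc)
  also have "\<dots> = 1" using Cons by (simp add: homl_def sexp_inv[OF d(2) d(1)])
  finally show ?case .
qed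

lemma pinv_pe:
  fixes L :: "'a::field_char_0 ser list"
  shows "homl L \<Longrightarrow> pinv L * pe L = 1"
proof (induction L)
  case Nil then show ?case by simp
next
  case (Cons a L)
  then obtain d where d: "1 \<le> d" "hom d a" by (auto simp: homl_def)
  have "pinv (a # L) * pe (a # L) = pinv L * (sexp (- a) * sexp a) * pe L"
    by (simp add: mult.assoc)
  also have "\<dots> = 1" using Cons sexp_inv[OF hom_uminus[OF d(2)] d(1)] by (simp add: homl_def)
  finally show ?case .
qed

lemma pe_Nil_coeff: "coeff (pe L) [] = 1"
  by (induction L) (simp_all add: mult_Nil sexp_Nil)

lemma Z_lieser:
  fixes L :: "'a::field_char_0 ser list"
  shows "goodl L \<Longrightarrow> lieser (Eu (pe L) * pinv L)"
proof (induction L)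
  case Nil then show ?case by (simp add: Eu_1 lieser_0)
next
  case (Cons a L)
  then obtain d where d: "1 \<le> d" "hom d a" and la: "islie a" and gL: "goodl L"
    by (auto simp: goodl_def)
  have pp: "pe L * pinv L = 1" by (rule pe_pinv[OF goodl_homl[OF gL]])
  have "Eu (pe (a # L)) * pinv (a # L) =
      const (of_nat d) * a * sexp a * (pe L * pinv L) * sexp (- a)
      + sexp a * (Eu (pe L) * pinv L) * sexp (- a)"
    by (simp add: Eu_mult Eu_sexp[OF d(2) d(1)] distrib_right mult.assoc)
  also have "\<dots> = const (of_nat d) * a + sexp a * (Eu (pe L) * pinv L) * sexp (- a)"
    by (simp add: pp mult.assoc sexp_inv[OF d(2) d(1)])
  finally have e: "Eu (pe (a # L)) * pinv (a # L) = \<dots>" .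
  show ?case unfolding e
    by (intro lieser_add lieser_const_mult lieser_hom[OF la d(2)] lieser_conj[OF d(2) d(1) la]
        Cons.IH gL)
qed

lemma lowest_lie:
  fixes L :: "'a::field_char_0 ser list"
  assumes g: "goodl L" and k: "1 \<le> k"
    and low: "\<And>w. 0 < length w \<Longrightarrow> length w < k \<Longrightarrow> coeff (pe L) w = 0"
  shows "islie (cmp k (pe L))"
proof -
  define Z where "Z = Eu (pe L) * pinv L"
  have "lieser Z" unfolding Z_def by (rule Z_lieser[OF g])
  then have lz: "islie (cmp k Z)" by (simp add: lieser_def)
  have pinv0: "coeff (pinv L) [] = 1" by (simp add: pinv_def pe_Nil_coeff)
  have "cmp k (pe L) = const (inverse (of_nat k)) * cmp k Z"
  proof (rule ser_eqI)
    fix w :: "bool list"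
    show "coeff (cmp k (pe L)) w = coeff (const (inverse (of_nat k)) * cmp k Z) w"
    proof (cases "length w = k")
      case False then show ?thesis by (simp add: coeff_comp)
    next
      case True
      have "coeff Z w = (\<Sum>i\<in>{k}. coeff (Eu (pe L)) (take i w) * coeff (pinv L) (drop i w))"
        unfolding Z_def coeff_mult
      proof (rule sum.mono_neutral_right)
        show "\<forall>i\<in>{..length w} - {k}. coeff (Eu (pe L)) (take i w) * coeff (pinv L) (drop i w) = 0"
        proof
          fix i assume i: "i \<in> {..length w} - {k}"
          then have ik: "i < k" "length (take i w) = i" using True by auto
          show "coeff (Eu (pe L)) (take i w) * coeff (pinv L) (drop i w) = 0"
          proof (cases "i = 0")
            case True then show ?thesis using ik by (simp add: coeff_Eu)
          next
            case False then show ?thesis using ik low[of "take i w"] by (simp add: coeff_Eu)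
          qed
        qed
      qed (use True in auto)
      also have "\<dots> = of_nat k * coeff (pe L) w" using True pinv0 by (simp add: coeff_Eu)
      finally have "coeff Z w = of_nat k * coeff (pe L) w" .
      moreover have "(of_nat k :: 'a) \<noteq> 0" using k by simp
      ultimately show ?thesis using True by (simp add: coeff_comp field_simps)
    qed
  qed
  then show ?thesis using lz by (simp add: islie_const_mult)
qed



definition hx :: "'a::field ser" where "hx = const (1/2) * Xs"
definition hy :: "'a::field ser" where "hy = const (1/2) * Ys"
definition Es :: "'a::field ser" where "Es = Xs + Ys"

lemma hom_Xs: "hom 1 Xs" by (simp add: hom_def Xs_def ps_X_def)
lemma hom_Ys: "hom 1 Ys" by (simp add: hom_def Ys_def ps_Y_def)
lemma hom_hx: "hom 1 hx" unfolding hx_def by (rule hom_const_mult[OF hom_Xs])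
lemma hom_hy: "hom 1 hy" unfolding hy_def by (rule hom_const_mult[OF hom_Ys])
lemma hom_Es: "hom 1 Es" unfolding Es_def by (rule hom_add[OF hom_Xs hom_Ys])
lemma islie_hx: "islie hx" by (simp add: hx_def islie_const_mult islie_X)
lemma islie_hy: "islie hy" by (simp add: hy_def islie_const_mult islie_Y)
lemma islie_Es: "islie Es" by (simp add: Es_def islie_add islie_X islie_Y)

definition Fr :: "'a::field ser list \<Rightarrow> 'a ser list" where "Fr L = [hx, hy] @ L"
definition Bk :: "'a::field ser list \<Rightarrow> 'a ser list" where "Bk L = rev L @ [hy, hx]"

definition Mc :: "'a::field ser list \<Rightarrow> 'a ser" where
  "Mc L = pinv (Fr L) * sexp Es * pinv (Bk L)"

definition Mcl :: "'a::field ser list \<Rightarrow> 'a ser list" where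
  "Mcl L = map uminus (rev (Fr L)) @ [Es] @ map uminus (rev (Bk L))"

lemma Mc_pe: "Mc L = pe (Mcl L)"
  by (simp add: Mc_def Mcl_def pinv_def pe_append mult.assoc)

definition nextC :: "'a::field ser list \<Rightarrow> nat \<Rightarrow> 'a ser" where
  "nextC L k = const (1/2) * cmp k (Mc L)"

primrec cl :: "nat \<Rightarrow> 'a::field ser list" where
  "cl 0 = []"
| "cl (Suc n) = cl n @ [nextC (cl n) (Suc (Suc n))]"

definition Cser :: "nat \<Rightarrow> 'a::field ser" where
  "Cser k = nextC (cl (k - 2)) k"

lemma cl_map: "cl n = map Cser [2..<n+2]"
  by (induction n) (simp_all add: Cser_def)

lemma goodl_append: "goodl (L @ M) \<longleftrightarrow> goodl L \<and> goodl M"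
  by (auto simp: goodl_def)

lemma goodl_single: "goodl [a] \<longleftrightarrow> islie a \<and> (\<exists>d. 1 \<le> d \<and> hom d a)"
  by (simp add: goodl_def)

lemma goodl_uminus: "goodl L \<Longrightarrow> goodl (map uminus L)"
  by (auto simp: goodl_def intro: islie_uminus hom_uminus)

lemma goodl_rev: "goodl (rev L) = goodl L" by (simp add: goodl_def)

lemma goodl_hxhy: "goodl [hx, hy]" "goodl [hy, hx]"
  using hom_hx hom_hy islie_hx islie_hy by (auto simp: goodl_def)

lemma goodl_Mcl: assumes "goodl L" shows "goodl (Mcl L)"
proof -
  have "goodl (Fr L)" unfolding Fr_def goodl_append using goodl_hxhy assms by blast
  moreover have "goodl (Bk L)" unfolding Bk_def goodl_append goodl_rev using goodl_hxhy assms by blast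
  moreover have "goodl [Es]" using islie_Es hom_Es by (auto simp: goodl_single)
  ultimately show ?thesis by (simp only: Mcl_def goodl_append goodl_uminus goodl_rev)
qed

lemma vgk_ge: "hom d a \<Longrightarrow> k \<le> d \<Longrightarrow> vg k a"
  using hom_vg vg_mono by blast

lemma sandwich:
  fixes u r :: "'a::comm_ring_1 ser"
  assumes "vg k u" "vg k r" "1 \<le> k"
  shows "vg (k + 1) ((1 + u) * (1 + r) * (1 + u) - 1 - (r + u + u))"
proof -
  have e: "(1 + u) * (1 + r) * (1 + u) - 1 - (r + u + u) = u * r + r * u + u * u + u * r * u"
    by (simp add: algebra_simps)
  have a: "vg (k + 1) (u * r)" using vg_mult[OF assms(1,2)] by (rule vg_mono) (use assms in simp)
  have b: "vg (k + 1) (r * u)" using vg_mult[OF assms(2,1)] by (rule vg_mono) (use assms in simp)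
  have c: "vg (k + 1) (u * u)" using vg_mult[OF assms(1,1)] by (rule vg_mono) (use assms in simp)
  have d: "vg (k + 1) (u * r * u)" using vg_mult_right[OF a] .
  show ?thesis unfolding e by (intro vg_add a b c d)
qed

lemma vg_sexp_1:
  fixes c :: "'a::field ser"
  assumes "hom d c" "1 \<le> d" "k \<le> d"
  shows "vg k (sexp c - 1)"
proof -
  have "sexp c - 1 = c + (sexp c - 1 - c)" by simp
  moreover have "vg k (sexp c - 1 - c)" using sexp_low[OF assms(1,2)] by (rule vg_mono) (use assms in simp)
  moreover have "vg k c" using vgk_ge assms by blast
  ultimately show ?thesis by (metis vg_add)
qed

lemma vg_sexp_2:
  fixes c :: "'a::field ser"
  assumes "hom k c" "1 \<le> k"
  shows "vg (k + 1) (sexp c - 1 - c)"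
  using sexp_low[OF assms] by (rule vg_mono) (use assms in simp)

lemma vg_pe_1:
  fixes L :: "'a::field ser list"
  assumes "\<forall>a\<in>set L. \<exists>d. k \<le> d \<and> 1 \<le> d \<and> hom d a"
  shows "vg k (pe L - 1)"
  using assms
proof (induction L)
  case Nil then show ?case by simp
next
  case (Cons a L)
  then obtain d where d: "k \<le> d" "1 \<le> d" "hom d a" by auto
  have eq: "pe (a # L) - 1 = (sexp a - 1) * pe L + (pe L - 1)" by (simp add: algebra_simps)
  have "vg k ((sexp a - 1) * pe L)" by (rule vg_mult_right[OF vg_sexp_1[OF d(3) d(2) d(1)]])
  then show ?case unfolding eq using Cons by (simp add: vg_add)
qed

lemma cmp_vg_small: "vg (k + 1) f \<Longrightarrow> cmp k f = 0"
  by (rule ser_eqI) (simp add: coeff_comp vg_def)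

lemma cmp_1: "1 \<le> k \<Longrightarrow> cmp k (1::'a::comm_ring_1 ser) = 0"
  by (rule ser_eqI) (auto simp: coeff_comp coeff_1)

lemma twice_half: "const (1/2) * c + const (1/2) * c = (c::'a::field_char_0 ser)"
proof -
  have h: "(1/2 + 1/2 :: 'a) = 1" by simp
  have "const (1/2) * c + const (1/2) * c = const (1/2 + 1/2) * c" by (simp only: const_add distrib_right)
  then show ?thesis by (simp only: h const_1 mult.left_neutral)
qed

lemma half_twice: "const (1/2) * (c + c) = (c::'a::field_char_0 ser)"
  by (simp only: distrib_left twice_half)

lemma coeff_mult_single: "coeff (f * g) [x] = coeff f [] * coeff g [x] + coeff f [x] * coeff g []"
  by (simp add: coeff_mult numeral_2_eq_2)

lemma coeff_sexp_single: "vg 1 a \<Longrightarrow> coeff (sexp a) [x] = coeff a [x]"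
  by (simp add: sexp_def coeff_1 vg_def)

lemma coeff_pe_single: "homl L \<Longrightarrow> coeff (pe L) [x] = sum_list (map (\<lambda>a. coeff a [x]) L)"
proof (induction L)
  case Nil then show ?case by simp
next
  case (Cons a L)
  then obtain d where "1 \<le> d" "hom d a" by (auto simp: homl_def)
  then have v: "vg 1 a" by (rule hom_vg1[rotated])
  have "coeff a [] = 0" using vgD[OF v] by simp
  with Cons v show ?case
    by (simp add: coeff_mult_single coeff_sexp_single sexp_Nil pe_Nil_coeff homl_def)
qed



lemma vg_minus_cmp:
  assumes "vg k (f - 1)" "1 \<le> k"
  shows "vg (k + 1) (f - 1 - cmp k f)"
  unfolding vg_def
proof (intro allI impI)
  fix w :: "bool list" assume w: "length w < k + 1"
  show "coeff (f - 1 - cmp k f) w = 0"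
  proof (cases "length w = k")
    case True
    then have "w \<noteq> []" using assms(2) by auto
    then show ?thesis using True by (simp add: coeff_comp coeff_1)
  next
    case False
    then show ?thesis using w vgD[OF assms(1), of w] by (simp add: coeff_comp)
  qed
qed

lemma Mc_snoc:
  "Mc (L @ [c]) = sexp (- c) * Mc L * sexp (- c)"
proof -
  have "pinv (Fr (L @ [c])) = sexp (- c) * pinv (Fr L)"
    by (simp add: Fr_def pinv_append[of "[hx, hy] @ L" "[c]", simplified])
  moreover have "pinv (Bk (L @ [c])) = pinv (Bk L) * sexp (- c)"
    by (simp add: Bk_def)
  ultimately show ?thesis by (simp add: Mc_def mult.assoc)
qed

lemma cl_good:
  "goodl (cl n :: 'a::field_char_0 ser list) \<and> vg (n + 2) (Mc (cl n :: 'a ser list) - 1)"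
proof (induction n)
  case 0
  have "vg (0 + 2) (Mc ([] :: 'a ser list) - 1)"
    unfolding vg_def
  proof (intro allI impI)
    fix w :: "bool list" assume w: "length w < 0 + 2"
    show "coeff (Mc ([] :: 'a ser list) - 1) w = 0"
    proof (cases w)
      case Nil then show ?thesis by (simp add: Mc_pe pe_Nil_coeff)
    next
      case (Cons x v)
      then have v: "v = []" using w by simp
      have hl: "homl (Mcl ([] :: 'a ser list))"
        using goodl_homl[OF goodl_Mcl[of "[] :: 'a ser list"]] by (simp add: goodl_def)
      have "coeff (Mc ([] :: 'a ser list)) [x] = 0"
        unfolding Mc_pe coeff_pe_single[OF hl]
        by (simp add: Mcl_def Fr_def Bk_def hx_def hy_def Es_def field_simps)
      then show ?thesis using Cons v by simp
    qed
  qed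
  then show ?case by (simp add: goodl_def)
next
  case (Suc n)
  define L where "L = (cl n :: 'a ser list)"
  define k where "k = n + 2"
  have gL: "goodl L" and vL: "vg k (Mc L - 1)" using Suc by (simp_all add: L_def k_def)
  have k1: "1 \<le> k" by (simp add: k_def)
  define c where "c = nextC L k"
  have cl: "cl (Suc n) = L @ [c]" by (simp add: L_def c_def k_def)
  have hc: "hom k c" unfolding c_def nextC_def by (intro hom_const_mult hom_comp)
  have lc: "islie c"
  proof -
    have "islie (cmp k (pe (Mcl L)))"
    proof (rule lowest_lie[OF goodl_Mcl[OF gL] k1])
      fix w :: "bool list" assume "0 < length w" "length w < k"
      then show "coeff (pe (Mcl L)) w = 0" using vgD[OF vL, of w] by (simp add: Mc_pe coeff_1)
    qed
    then show ?thesis by (simp add: c_def nextC_def Mc_pe islie_const_mult)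
  qed
  have gL': "goodl (L @ [c])" using gL lc hc k1 by (auto simp: goodl_append goodl_single)
  define u where "u = sexp (- c) - 1"
  define r where "r = Mc L - 1"
  have hc': "hom k (- c)" by (rule hom_uminus[OF hc])
  have vu: "vg k u" unfolding u_def by (rule vg_sexp_1[OF hc' k1]) simp
  have vr: "vg k r" using vL by (simp add: r_def)
  have ck: "cmp k (Mc L) = c + c" by (simp add: c_def nextC_def twice_half)
  have "r + u + u = (Mc L - 1 - cmp k (Mc L)) + (sexp (- c) - 1 - (- c)) + (sexp (- c) - 1 - (- c))"
    by (simp add: r_def u_def ck algebra_simps)
  moreover have "vg (k + 1) (Mc L - 1 - cmp k (Mc L))" by (rule vg_minus_cmp[OF vL k1])
  moreover have "vg (k + 1) (sexp (- c) - 1 - (- c))" by (rule vg_sexp_2[OF hc' k1])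
  ultimately have v1: "vg (k + 1) (r + u + u)" by (simp add: vg_add)
  have v2: "vg (k + 1) ((1 + u) * (1 + r) * (1 + u) - 1 - (r + u + u))" by (rule sandwich[OF vu vr k1])
  have eq: "Mc (L @ [c]) - 1 = ((1 + u) * (1 + r) * (1 + u) - 1 - (r + u + u)) + (r + u + u)"
    by (simp add: Mc_snoc u_def r_def)
  have "vg (k + 1) (Mc (L @ [c]) - 1)" unfolding eq by (rule vg_add[OF v2 v1])
  then show ?case unfolding cl using gL' by (simp add: k_def)
qed

lemma Cser_hom: "hom k (Cser k)"
  unfolding Cser_def nextC_def by (intro hom_const_mult hom_comp)

lemma Cser_lie:
  assumes "2 \<le> k" shows "islie (Cser k :: 'a::field_char_0 ser)"
proof -
  have "goodl (cl (Suc (k - 2)) :: 'a ser list)" using cl_good by blast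
  moreover have "cl (Suc (k - 2)) = cl (k - 2) @ [Cser k :: 'a ser]"
  proof -
    obtain m where "k = m + 2" using assms by (metis le_add_diff_inverse2)
    then show ?thesis by (simp add: Cser_def)
  qed
  ultimately show ?thesis by (simp add: goodl_append goodl_single)
qed

lemma sym_partial_pe:
  "sym_partial C N = coeff (pe (Fr (map (\<lambda>j. Ser (C j)) [2..<Suc N]) @ Bk (map (\<lambda>j. Ser (C j)) [2..<Suc N])))"
  unfolding sym_partial_def ps_prod_list_ser
  by (simp add: ps_exp_ser ps_smult_ser coeff_inverse pe_def Fr_def Bk_def rev_map hx_def hy_def
      Xs_def Ys_def o_def)

lemma E_ser: "ps_exp (ps_add ps_X ps_Y) = coeff (sexp (Es :: 'a::field ser))"
  by (simp add: ps_exp_ser ps_add_ser coeff_inverse Es_def Xs_def Ys_def)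

lemma formal_lim_unif:
  fixes F :: "nat \<Rightarrow> 'a::field ncps"
  assumes "formal_lim F L"
  shows "\<exists>N0. \<forall>N\<ge>N0. \<forall>w. length w \<le> K \<longrightarrow> F N w = L w"
proof -
  from assms obtain f where f: "\<And>w N. N \<ge> f w \<Longrightarrow> F N w = L w"
    unfolding formal_lim_def by metis
  define S where "S = {w :: bool list. set w \<subseteq> UNIV \<and> length w \<le> K}"
  have fin: "finite S" unfolding S_def by (rule finite_lists_length_le) simp
  show ?thesis
  proof (intro exI allI impI)
    fix N :: nat and w :: "bool list" assume N: "Max (f ` S) \<le> N" and w: "length w \<le> K"
    then have "w \<in> S" by (simp add: S_def)
    then have "f w \<le> Max (f ` S)" using fin by simp
    then show "F N w = L w" using N f by simp
  qed
qed



definition Cf :: "nat \<Rightarrow> 'a::field_char_0 ncps" where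
  "Cf k = coeff (Cser k)"

lemma Ser_Cf: "Ser (Cf k) = Cser k" by (simp add: Cf_def coeff_inverse)

lemma goodl_Fr: "goodl L \<Longrightarrow> goodl (Fr L)"
  unfolding Fr_def goodl_append using goodl_hxhy by blast
lemma goodl_Bk: "goodl L \<Longrightarrow> goodl (Bk L)"
  unfolding Bk_def goodl_append goodl_rev using goodl_hxhy by blast

lemma E0_decomp:
  fixes L :: "'a::field_char_0 ser list"
  assumes "goodl L"
  shows "pe (Fr L) * Mc L * pe (Bk L) = sexp Es"
proof -
  have a: "pe (Fr L) * pinv (Fr L) = 1" by (rule pe_pinv[OF goodl_homl[OF goodl_Fr[OF assms]]])
  have b: "pinv (Bk L) * pe (Bk L) = 1" by (rule pinv_pe[OF goodl_homl[OF goodl_Bk[OF assms]]])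
  have "pe (Fr L) * Mc L * pe (Bk L) = (pe (Fr L) * pinv (Fr L)) * sexp Es * (pinv (Bk L) * pe (Bk L))"
    by (simp add: Mc_def mult.assoc)
  then show ?thesis by (simp add: a b)
qed

lemma exist_lim:
  "formal_lim (sym_partial (Cf :: nat \<Rightarrow> 'a::field_char_0 ncps)) (ps_exp (ps_add ps_X ps_Y))"
  unfolding formal_lim_def
proof
  fix w :: "bool list"
  show "\<exists>N0. \<forall>N\<ge>N0. sym_partial (Cf :: nat \<Rightarrow> 'a ncps) N w = ps_exp (ps_add ps_X ps_Y) w"
  proof (intro exI allI impI)
    fix N assume N: "Suc (length w) \<le> N"
    define n where "n = N - 1"
    define L where "L = (cl n :: 'a ser list)"
    have n2: "n + 2 = Suc N" using N by (simp add: n_def)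
    have mL: "map (\<lambda>j. Ser (Cf j :: 'a ncps)) [2..<Suc N] = L"
      unfolding L_def cl_map n2 by (simp only: Ser_Cf)
    have cg: "goodl L \<and> vg (n + 2) (Mc L - 1)" unfolding L_def by (rule cl_good)
    then have gL: "goodl L" and vL: "vg (n + 2) (Mc L - 1)" by simp_all
    have "sym_partial (Cf :: nat \<Rightarrow> 'a ncps) N = coeff (pe (Fr L) * pe (Bk L))"
      by (simp only: sym_partial_pe mL pe_append)
    moreover have "ps_exp (ps_add ps_X ps_Y) = coeff (pe (Fr L) * Mc L * pe (Bk L))"
      by (simp add: E_ser E0_decomp[OF gL])
    moreover have "vg (n + 2) (pe (Fr L) * Mc L * pe (Bk L) - pe (Fr L) * pe (Bk L))"
    proof -
      have "pe (Fr L) * Mc L * pe (Bk L) - pe (Fr L) * pe (Bk L) = pe (Fr L) * (Mc L - 1) * pe (Bk L)"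
        by (simp add: algebra_simps)
      then show ?thesis using vL by (simp add: vg_mult_left vg_mult_right)
    qed
    moreover have "length w < n + 2" using N by (simp add: n_def)
    ultimately show "sym_partial (Cf :: nat \<Rightarrow> 'a ncps) N w = ps_exp (ps_add ps_X ps_Y) w"
      using vgD by fastforce
  qed
qed

lemma Cf_props: "2 \<le> k \<Longrightarrow> Cf k \<in> lie_polys \<and> homogeneous k (Cf k)"
  using Cser_lie[of k] Cser_hom[of k] by (simp add: Cf_def islie_def hom_def homogeneous_def)

lemma Cf_sym: "sym_factorization (Cf :: nat \<Rightarrow> 'a::field_char_0 ncps)"
  unfolding sym_factorization_def using Cf_props exist_lim by blast

lemma uniq:
  fixes C' :: "nat \<Rightarrow> 'a::field_char_0 ncps"
  assumes sf: "sym_factorization C'"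
  shows "2 \<le> k \<Longrightarrow> C' k = Cf k"
proof (induction k rule: less_induct)
  case (less k)
  define Cs where "Cs j = Ser (C' j)" for j
  have homC: "hom j (Cs j)" if "2 \<le> j" for j
    using sf that by (simp add: sym_factorization_def Cs_def hom_def homogeneous_def)
  define n where "n = k - 2"
  define L where "L = (cl n :: 'a ser list)"
  have nk: "n + 2 = k" using less.prems by (simp add: n_def)
  have k1: "1 \<le> k" using less.prems by simp
  have gL: "goodl L" unfolding L_def using cl_good[of n] by blast
  have Lm: "map Cs [2..<k] = L"
    unfolding L_def cl_map nk
  proof (rule map_cong[OF refl])
    fix j assume "j \<in> set [2..<k]"
    then have "2 \<le> j" "j < k" by auto
    then show "Cs j = Cser j" using less.IH[of j] by (simp add: Cs_def Ser_Cf)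
  qed
  have fl: "formal_lim (sym_partial C') (ps_exp (ps_add ps_X ps_Y))"
    using sf by (simp add: sym_factorization_def)
  obtain N0 where N0: "\<And>N w. N \<ge> N0 \<Longrightarrow> length w \<le> k \<Longrightarrow> sym_partial C' N w = ps_exp (ps_add ps_X ps_Y) w"
    using formal_lim_unif[OF fl, of k] by blast
  define N where "N = max N0 k"
  define R where "R = map Cs [Suc k..<Suc N]"
  define c where "c = Cs k"
  have hc: "hom k c" unfolding c_def using homC less.prems by simp
  have split: "map Cs [2..<Suc N] = L @ [c] @ R"
  proof -
    have "[2..<Suc N] = [2..<k] @ [k..<Suc N]"
      using upt_add_eq_append[of 2 k "Suc N - k"] less.prems by (simp add: N_def)
    also have "[k..<Suc N] = k # [Suc k..<Suc N]" by (simp add: N_def upt_conv_Cons)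
    finally show ?thesis by (simp add: Lm R_def c_def)
  qed
  define Q where "Q = pe (R @ rev R)"
  define T where "T = sexp c * Q * sexp c"
  define S where "S = pe (Fr (L @ [c] @ R) @ Bk (L @ [c] @ R))"
  have ST: "S = pe (Fr L) * T * pe (Bk L)"
    by (simp add: S_def T_def Q_def Fr_def Bk_def pe_append mult.assoc)
  have vQ: "vg (k + 1) (Q - 1)"
    unfolding Q_def
  proof (rule vg_pe_1, intro ballI)
    fix a assume "a \<in> set (R @ rev R)"
    then obtain j where j: "Suc k \<le> j" "a = Cs j" by (auto simp: R_def)
    then show "\<exists>d. k + 1 \<le> d \<and> 1 \<le> d \<and> hom d a" using homC[of j] less.prems by auto
  qed
  have hF: "homl (Fr L)" and hB: "homl (Bk L)" using goodl_homl goodl_Fr goodl_Bk gL by blast+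
  have vES: "vg (k + 1) (sexp Es - S)"
    unfolding vg_def
  proof (intro allI impI)
    fix w :: "bool list" assume "length w < k + 1"
    then have "sym_partial C' N w = ps_exp (ps_add ps_X ps_Y) w" by (intro N0) (auto simp: N_def)
    moreover have "sym_partial C' N = coeff S"
    proof -
      have CsE: "(\<lambda>j. Ser (C' j)) = Cs" by (simp add: fun_eq_iff Cs_def)
      show ?thesis by (simp only: sym_partial_pe CsE split S_def)
    qed
    ultimately show "coeff (sexp Es - S) w = 0" by (simp add: E_ser)
  qed
  have "Mc L - T = pinv (Fr L) * (sexp Es - S) * pinv (Bk L)"
  proof -
    have "pinv (Fr L) * S * pinv (Bk L) = (pinv (Fr L) * pe (Fr L)) * T * (pe (Bk L) * pinv (Bk L))"
      by (simp add: ST mult.assoc)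
    also have "\<dots> = T" by (simp add: pinv_pe[OF hF] pe_pinv[OF hB])
    finally show ?thesis by (simp add: Mc_def algebra_simps)
  qed
  then have "vg (k + 1) (Mc L - T)" using vES by (simp add: vg_mult_left vg_mult_right)
  then have cM: "cmp k (Mc L) = cmp k T"
    using cmp_vg_small[of k "Mc L - T"] by (simp add: comp_diff)
  have "vg (k + 1) (T - 1 - (c + c))"
  proof -
    define u where "u = sexp c - 1"
    define r where "r = Q - 1"
    have vu: "vg k u" unfolding u_def by (rule vg_sexp_1[OF hc k1]) simp
    have vr: "vg k r" unfolding r_def by (rule vg_mono[OF vQ]) simp
    have e: "T - 1 - (c + c) = ((1 + u) * (1 + r) * (1 + u) - 1 - (r + u + u)) + r
        + (sexp c - 1 - c) + (sexp c - 1 - c)"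
      by (simp add: T_def u_def r_def algebra_simps)
    have vr1: "vg (k + 1) r" unfolding r_def by (rule vQ)
    show ?thesis unfolding e
      by (intro vg_add sandwich[OF vu vr k1] vg_sexp_2[OF hc k1] vr1)
  qed
  then have "cmp k T = c + c"
    using cmp_vg_small[of k "T - 1 - (c + c)"] k1
    by (simp add: comp_diff comp_add cmp_1 comp_hom[OF hc])
  then have "Cser k = c"
    using cM by (simp add: Cser_def nextC_def n_def[symmetric] L_def[symmetric] half_twice)
  then show ?case by (simp add: Cf_def c_def Cs_def)
qed



definition sig :: "'a::field ser \<Rightarrow> 'a ser" where
  "sig f = Ser (\<lambda>w. (-1) ^ length w * coeff f w)"

lemma coeff_sig: "coeff (sig f) w = (-1) ^ length w * coeff f w"
  by (simp add: sig_def)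

lemma sig_mult: "sig (f * g) = sig f * sig g"
proof (rule ser_eqI)
  fix w :: "bool list"
  have "coeff (sig (f * g)) w = (\<Sum>i\<le>length w. (-1) ^ length w * (coeff f (take i w) * coeff g (drop i w)))"
    by (simp add: coeff_sig coeff_mult sum_distrib_left)
  also have "\<dots> = (\<Sum>i\<le>length w. ((-1) ^ length (take i w) * coeff f (take i w)) *
      ((-1) ^ length (drop i w) * coeff g (drop i w)))"
  proof (rule sum.cong[OF refl])
    fix i assume "i \<in> {..length w}"
    then have "length w = length (take i w) + length (drop i w)" by simp
    then have "((-1) ^ length w :: 'a) = (-1) ^ length (take i w) * (-1) ^ length (drop i w)"
      by (metis power_add)
    then show "(-1) ^ length w * (coeff f (take i w) * coeff g (drop i w)) =
      ((-1) ^ length (take i w) * coeff f (take i w)) * ((-1) ^ length (drop i w) * coeff g (drop i w))"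
      by (simp add: algebra_simps)
  qed
  also have "\<dots> = coeff (sig f * sig g) w"
    by (simp only: coeff_mult coeff_sig)
  finally show "coeff (sig (f * g)) w = coeff (sig f * sig g) w" .
qed

lemma sig_1: "sig 1 = 1" by (rule ser_eqI) (simp add: coeff_sig coeff_1)
lemma sig_diff: "sig (f - g) = sig f - sig g" by (rule ser_eqI) (simp add: coeff_sig algebra_simps)
lemma sig_uminus: "sig (- f) = - sig f" by (rule ser_eqI) (simp add: coeff_sig)
lemma sig_pow: "sig (f ^ n) = sig f ^ n" by (induction n) (simp_all add: sig_1 sig_mult)

lemma sig_sexp: "sig (sexp a) = sexp (sig a)"
  by (rule ser_eqI) (simp add: coeff_sig sexp_def sig_pow[symmetric] sum_distrib_left)

lemma sig_hom: "hom k f \<Longrightarrow> sig f = const ((-1) ^ k) * f"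
  apply (rule ser_eqI)
  subgoal for w by (cases "coeff f w = 0") (auto simp: coeff_sig hom_def)
  done

lemma sig_pe: "sig (pe L) = pe (map sig L)"
  by (induction L) (simp_all add: sig_1 sig_mult sig_sexp)

lemma vg_sig: "vg n f \<Longrightarrow> vg n (sig f)" by (simp add: vg_def coeff_sig)

lemma sig_hom1: "hom 1 f \<Longrightarrow> sig f = - f"
  by (simp add: sig_hom const_uminus const_1)

definition C2 :: "nat \<Rightarrow> 'a::field_char_0 ncps" where
  "C2 k = ps_smult (- ((-1) ^ k)) (Cf k)"

lemma Ser_C2: "Ser (C2 k) = const (- ((-1) ^ k)) * Cser k"
  by (simp add: C2_def ps_smult_ser Ser_Cf coeff_inverse)

lemma sig_Cser: "sig (Cser k) = - Ser (C2 k :: 'a::field_char_0 ncps)"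
  by (simp add: Ser_C2 sig_hom[OF Cser_hom] const_uminus)

lemma map_sig_FrBk:
  assumes "map sig L = map uminus L'"
  shows "map sig (Fr L @ Bk L) = map uminus (Fr L' @ Bk L')"
proof -
  have "map sig (rev L) = map uminus (rev L')" using assms by (simp add: rev_map[symmetric])
  then show ?thesis using assms
    by (simp add: Fr_def Bk_def sig_hom1[OF hom_hx] sig_hom1[OF hom_hy])
qed

lemma homl_FrBk: "homl L \<Longrightarrow> homl (Fr L @ Bk L)"
  using hom_hx hom_hy by (auto simp: homl_def Fr_def Bk_def)

lemma C2_lim:
  "formal_lim (sym_partial (C2 :: nat \<Rightarrow> 'a::field_char_0 ncps)) (ps_exp (ps_add ps_X ps_Y))"
  unfolding formal_lim_def
proof
  fix w :: "bool list"
  obtain N0 where N0: "\<And>N v. N \<ge> N0 \<Longrightarrow> length v \<le> length w \<Longrightarrow>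
      sym_partial (Cf :: nat \<Rightarrow> 'a ncps) N v = ps_exp (ps_add ps_X ps_Y) v"
    using formal_lim_unif[OF exist_lim, of "length w"] by blast
  show "\<exists>N0. \<forall>N\<ge>N0. sym_partial (C2 :: nat \<Rightarrow> 'a ncps) N w = ps_exp (ps_add ps_X ps_Y) w"
  proof (intro exI allI impI)
    fix N assume N: "N0 \<le> N"
    define Lc where "Lc = map (\<lambda>j. Ser (Cf j :: 'a ncps)) [2..<Suc N]"
    define L2 where "L2 = map (\<lambda>j. Ser (C2 j :: 'a ncps)) [2..<Suc N]"
    define S where "S = pe (Fr Lc @ Bk Lc)"
    define S2 where "S2 = pe (Fr L2 @ Bk L2)"
    define E0 where "E0 = sexp (Es :: 'a ser)"
    have ms: "map sig Lc = map uminus L2"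
      by (simp add: Lc_def L2_def Ser_Cf sig_Cser)
    have hL2: "homl L2"
    proof -
      have hC: "hom j (Ser (C2 j :: 'a ncps))" for j
        by (simp add: Ser_C2 hom_const_mult Cser_hom)
      show ?thesis unfolding homl_def L2_def
      proof
        fix a assume "a \<in> set (map (\<lambda>j. Ser (C2 j :: 'a ncps)) [2..<Suc N])"
        then obtain j where j: "2 \<le> j" "a = Ser (C2 j)" by auto
        then show "\<exists>d. 1 \<le> d \<and> hom d a" using hC[of j]
          by (intro exI[of _ j]) auto
      qed
    qed
    have pal: "rev (Fr L2 @ Bk L2) = Fr L2 @ Bk L2" by (simp add: Fr_def Bk_def)
    have sS: "sig S = pinv (Fr L2 @ Bk L2)"
      unfolding S_def sig_pe map_sig_FrBk[OF ms] pinv_def pal ..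
    have S2sS: "S2 * sig S = 1" unfolding S2_def sS by (rule pe_pinv[OF homl_FrBk[OF hL2]])
    have sE: "sig E0 * E0 = 1"
    proof -
      have "sexp (- Es) * sexp (- (- Es)) = (1 :: 'a ser)"
        by (rule sexp_inv[OF hom_uminus[OF hom_Es]]) simp
      then show ?thesis by (simp add: E0_def sig_sexp sig_hom1[OF hom_Es])
    qed
    have eq: "S2 - E0 = S2 * (sig E0 - sig S) * E0"
    proof -
      have "S2 * (sig E0 - sig S) * E0 = S2 * (sig E0 * E0) - (S2 * sig S) * E0"
        by (simp add: algebra_simps)
      then show ?thesis by (simp add: sE S2sS)
    qed
    have "vg (length w + 1) (E0 - S)"
      unfolding vg_def
    proof (intro allI impI)
      fix v :: "bool list" assume "length v < length w + 1"
      then have "sym_partial (Cf :: nat \<Rightarrow> 'a ncps) N v = ps_exp (ps_add ps_X ps_Y) v"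
        using N by (intro N0) auto
      then show "coeff (E0 - S) v = 0"
        by (simp add: sym_partial_pe E_ser E0_def S_def Lc_def)
    qed
    then have "vg (length w + 1) (sig E0 - sig S)" by (metis vg_sig sig_diff)
    then have "vg (length w + 1) (S2 - E0)" unfolding eq by (simp add: vg_mult_left vg_mult_right)
    then have "coeff S2 w = coeff E0 w" using vgD by fastforce
    then show "sym_partial (C2 :: nat \<Rightarrow> 'a ncps) N w = ps_exp (ps_add ps_X ps_Y) w"
      by (simp add: sym_partial_pe E_ser E0_def S2_def L2_def)
  qed
qed

lemma C2_sym: "sym_factorization (C2 :: nat \<Rightarrow> 'a::field_char_0 ncps)"
  unfolding sym_factorization_def
proof (intro conjI allI impI)
  fix k :: nat assume k: "2 \<le> k"
  show "(C2 k :: 'a ncps) \<in> lie_polys" unfolding C2_def by (intro lie_smult) (use Cf_props[OF k, where 'a='a] in blast)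
  have "homogeneous k (Cf k :: 'a ncps)" using Cf_props[OF k, where 'a='a] by blast
  then show "homogeneous k (C2 k :: 'a ncps)"
    unfolding homogeneous_def C2_def ps_smult_def by auto
qed (rule C2_lim)

lemma Cf_even: "1 \<le> k \<Longrightarrow> Cf (2 * k) = (\<lambda>w. 0 :: 'a::field_char_0)"
proof -
  assume k: "1 \<le> k"
  have "C2 (2 * k) = (Cf (2 * k) :: 'a ncps)" using uniq[OF C2_sym, of "2 * k"] k by simp
  then have "\<And>w. - Cf (2 * k) w = (Cf (2 * k) w :: 'a)"
    by (simp add: C2_def ps_smult_def fun_eq_iff)
  then show ?thesis by (simp add: fun_eq_iff)
qed

theorem theorem1:
  shows "\<exists>C :: nat \<Rightarrow> 'k::field_char_0 ncps.
           sym_factorization C \<and>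
           (\<forall>C'. sym_factorization C' \<longrightarrow> (\<forall>k\<ge>2. C' k = C k)) \<and>
           (\<forall>k\<ge>1. C (2 * k) = (\<lambda>w. 0))"
  using Cf_sym uniq Cf_even by blast


end
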